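(* (I) Massless regime: if $q=e^{\eta}$ with $\eta\in i\mathbb{R}$ (so $q$ is a pure phase) and all inhomogeneities $\eta_1,\dots,\eta_{\mathsf N}$ are real, then $\bar{\mathsf T}(\lambda)$ is a normal operator for every $\lambda\in\mathbb C$, and $i\,\bar{\mathsf T}(\lambda)$ is self-adjoint for every $\lambda$ with $\lambda q^{1/2}\in\mathbb{R}$ (where $q^{1/2}=e^{\eta/2}$). (II) Massive regime: if $\eta\in\mathbb{R}$ (so $q>0$) and all inhomogeneities $\eta_1,\dots,\eta_{\mathsf N}$ are pure phases, then $\bar{\mathsf T}(\lambda)$ is a normal operator for every $\lambda\in\mathbb C$, and $i^{\mathsf e_{\mathsf N}}\bar{\mathsf T}(\lambda)$ is self-adjoint for every $\lambda$ with $\lambda q^{1/2}$ a pure phase, where $\mathsf e_{\mathsf N}=1$ if $\mathsf N$ is even and $\mathsf e_{\mathsf N}=0$ if $\mathsf N$ is odd. Adjoints are taken with respect to the standard Hermitian inner product on $\mathcal R_{\mathsf N}=(\mathbb C^2)^{\otimes\mathsf N}$ for which the tensor products of the $\sigma^z$-eigenvectors form an orthonormal basis.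
   Context: Fix $q=e^{\eta}\in\mathbb C$, $q\neq\pm1$, an integer $\mathsf N\ge1$ and inhomogeneities $\eta_1,\dots,\eta_{\mathsf N}\in\mathbb C\setminus\{0\}$. Let $\mathcal R_{\mathsf N}=\bigotimes_{n=1}^{\mathsf N}\mathbb C^2$. On the $n$-th factor let $|1,n\rangle,|-1,n\rangle$ be the basis of $\sigma^z_n$-eigenvectors (eigenvalues $\pm1$), $\sigma^{x},\sigma^y,\sigma^z$ the Pauli matrices, $\sigma^+=E_{12}$ (so $\sigma^+|-1\rangle=|1\rangle$), $\sigma^-=E_{21}$; $X_n$ denotes a $2\times2$ matrix $X$ acting on the $n$-th factor. With an auxiliary space $\mathbb C^2$ (label $0$), the Lax operator is the $2\times2$ matrix in space $0$ $\mathsf L_{0n}(\lambda)=\begin{pmatrix}x_+(\lambda)+x_-(\lambda)\sigma^z_n & (q-q^{-1})\sigma^-_n\\ (q-q^{-1})\sigma^+_n & x_+(\lambda)-x_-(\lambda)\sigma^z_n\end{pmatrix}$, $x_\pm(\lambda)=\tfrac12\big(\lambda q-(q\lambda)^{-1}\pm(\lambda-\lambda^{-1})\big)$. The monodromy matrix is $\mathsf M_0(\lambda)=\mathsf L_{0\mathsf N}(\lambda/\eta_{\mathsf N})\cdots\mathsf L_{01}(\lambda/\eta_1)=\begin{pmatrix}\mathsf A(\lambda)&\mathsf B(\lambda)\\ \mathsf C(\lambda)&\mathsf D(\lambda)\end{pmatrix}$ with entries in $\mathrm{End}(\mathcal R_{\mathsf N})$, and the antiperiodic transfer matrix is $\bar{\mathsf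 T}(\lambda)=\mathsf B(\lambda)+\mathsf C(\lambda)$. *)

theory Defs
  imports Complex_Main
begin

text \<open>Model of the quantum space (C^2)^{tensor N}, sites 1..N. A basis vector
(tensor product of sigma^z eigenvectors) is encoded by the set S of sites
carrying the eigenvalue +1 (state |1,n>); the other sites carry |-1,n>. An operator is given
by its matrix entries  A S T = <S|A|T>  in this orthonormal basis.\<close>

type_synonym op = "nat set \<Rightarrow> nat set \<Rightarrow> complex"

definition configs :: "nat \<Rightarrow> nat set set" where
  "configs N = Pow {1..N}"

definition op_mult :: "nat \<Rightarrow> op \<Rightarrow> op \<Rightarrow> op" where
  "op_mult N A B = (\<lambda>S T. \<Sum>U\<in>configs N. A S U * B U T)"

definition op_add :: "op \<Rightarrow> op \<Rightarrow> op" where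
  "op_add A B = (\<lambda>S T. A S T + B S T)"

definition op_scale :: "complex \<Rightarrow> op \<Rightarrow> op" where
  "op_scale c A = (\<lambda>S T. c * A S T)"

definition op_id :: op where
  "op_id = (\<lambda>S T. if S = T then 1 else 0)"

text \<open>Adjoint w.r.t. the Hermitian inner product making the basis orthonormal.\<close>
definition op_adj :: "op \<Rightarrow> op" where
  "op_adj A = (\<lambda>S T. cnj (A T S))"

definition op_eq :: "nat \<Rightarrow> op \<Rightarrow> op \<Rightarrow> bool" where
  "op_eq N A B \<longleftrightarrow> (\<forall>S\<in>configs N. \<forall>T\<in>configs N. A S T = B S T)"

definition normal_op :: "nat \<Rightarrow> op \<Rightarrow> bool" where
  "normal_op N A \<longleftrightarrow> op_eq N (op_mult N A (op_adj A)) (op_mult N (op_adj A) A)"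

definition self_adjoint_op :: "nat \<Rightarrow> op \<Rightarrow> bool" where
  "self_adjoint_op N A \<longleftrightarrow> op_eq N (op_adj A) A"

text \<open>2x2 matrices on a single C^2 factor, indexed by booleans:
True = |1> (sigma^z eigenvalue +1, first basis vector), False = |-1>.\<close>
type_synonym mat2 = "bool \<Rightarrow> bool \<Rightarrow> complex"

definition sigma_z :: mat2 where
  "sigma_z = (\<lambda>a b. if a = b then (if a then 1 else -1) else 0)"

definition sigma_plus :: mat2 where
  "sigma_plus = (\<lambda>a b. if a \<and> \<not> b then 1 else 0)"

definition sigma_minus :: mat2 where
  "sigma_minus = (\<lambda>a b. if \<not> a \<and> b then 1 else 0)"

text \<open>X_n: the 2x2 matrix X acting on the n-th tensor factor.\<close>
definition local_op :: "nat \<Rightarrow> mat2 \<Rightarrow> op" where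
  "local_op n X = (\<lambda>S T. if S - {n} = T - {n} then X (n \<in> S) (n \<in> T) else 0)"

text \<open>2x2 matrices in the auxiliary space 0 with operator entries,
indexed by 0,1 (i.e. rows/columns 1,2 of the paper).\<close>
type_synonym auxmat = "nat \<Rightarrow> nat \<Rightarrow> op"

definition aux_mult :: "nat \<Rightarrow> auxmat \<Rightarrow> auxmat \<Rightarrow> auxmat" where
  "aux_mult N M1 M2 = (\<lambda>a b. \<lambda>S T. \<Sum>c<2. op_mult N (M1 a c) (M2 c b) S T)"

definition aux_id :: auxmat where
  "aux_id = (\<lambda>a b. if a = b then op_id else (\<lambda>S T. 0))"

definition x_plus :: "complex \<Rightarrow> complex \<Rightarrow> complex" where
  "x_plus q z = (z * q - inverse (q * z) + (z - inverse z)) / 2"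

definition x_minus :: "complex \<Rightarrow> complex \<Rightarrow> complex" where
  "x_minus q z = (z * q - inverse (q * z) - (z - inverse z)) / 2"

definition lax :: "complex \<Rightarrow> nat \<Rightarrow> complex \<Rightarrow> auxmat" where
  "lax q n z = (\<lambda>a b.
     if a = 0 \<and> b = 0 then op_add (op_scale (x_plus q z) op_id) (op_scale (x_minus q z) (local_op n sigma_z))
     else if a = 0 \<and> b = 1 then op_scale (q - inverse q) (local_op n sigma_minus)
     else if a = 1 \<and> b = 0 then op_scale (q - inverse q) (local_op n sigma_plus)
     else if a = 1 \<and> b = 1 then op_add (op_scale (x_plus q z) op_id) (op_scale (- x_minus q z) (local_op n sigma_z))
     else (\<lambda>S T. 0))"

text \<open>Partial monodromy  L_{0k}(\<lambda>/\<eta>_k) ... L_{01}(\<lambda>/\<eta>_1), computed with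
operator products on the N-site space.\<close>
primrec monodromy_upto :: "nat \<Rightarrow> complex \<Rightarrow> (nat \<Rightarrow> complex) \<Rightarrow> complex \<Rightarrow> nat \<Rightarrow> auxmat" where
  "monodromy_upto N q inh z 0 = aux_id"
| "monodromy_upto N q inh z (Suc k) =
     aux_mult N (lax q (Suc k) (z / inh (Suc k))) (monodromy_upto N q inh z k)"

definition monodromy :: "nat \<Rightarrow> complex \<Rightarrow> (nat \<Rightarrow> complex) \<Rightarrow> complex \<Rightarrow> auxmat" where
  "monodromy N q inh z = monodromy_upto N q inh z N"

definition antiperiodic_transfer :: "nat \<Rightarrow> complex \<Rightarrow> (nat \<Rightarrow> complex) \<Rightarrow> complex \<Rightarrow> op" where
  "antiperiodic_transfer N q inh z = op_add (monodromy N q inh z 0 1) (monodromy N q inh z 1 0)"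

end

theory Submission
  imports Defs "HOL-Computational_Algebra.Polynomial"
begin


definition Lm :: "complex \<Rightarrow> complex \<Rightarrow> nat \<Rightarrow> nat \<Rightarrow> bool \<Rightarrow> bool \<Rightarrow> complex" where
 "Lm q w a b s t = (if a = 0 \<and> b = 0 then x_plus q w * (if s = t then 1 else 0) + x_minus q w * sigma_z s t
   else if a = 0 \<and> b = 1 then (q - inverse q) * sigma_minus s t
   else if a = 1 \<and> b = 0 then (q - inverse q) * sigma_plus s t
   else if a = 1 \<and> b = 1 then x_plus q w * (if s = t then 1 else 0) + (- x_minus q w) * sigma_z s t
   else 0)"

definition Rm :: "complex \<Rightarrow> complex \<Rightarrow> nat \<Rightarrow> nat \<Rightarrow> nat \<Rightarrow> nat \<Rightarrow> complex" where
 "Rm q u a b c d = (if a = c \<and> b = d then (if a = b then u*q - inverse (u*q) else u - inverse u)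
    else if a \<noteq> b \<and> c = b \<and> d = a then q - inverse q else 0)"

definition Hm :: "complex \<Rightarrow> complex \<Rightarrow> complex \<Rightarrow> nat \<Rightarrow> nat \<Rightarrow> nat \<Rightarrow> nat \<Rightarrow> bool \<Rightarrow> bool \<Rightarrow> complex" where
 "Hm q w1 w2 a b c d s t = Lm q w1 a c s True * Lm q w2 b d True t + Lm q w1 a c s False * Lm q w2 b d False t"

lemma two_cases: "(a::nat) < 2 \<Longrightarrow> a = 0 \<or> a = 1" by auto

lemma sum2: "(\<Sum>c<2. f c) = f 0 + f (1::nat)"
  by (simp add: numeral_2_eq_2)

lemma RLL:
  assumes "w1 \<noteq> 0" "w2 \<noteq> 0" "q \<noteq> 0" "a<2" "b<2" "g<2" "h<2"
  shows "(\<Sum>c<2. \<Sum>d<2. Rm q (w1/w2) a b c d * Hm q w1 w2 c d g h s t) =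
         (\<Sum>c<2. \<Sum>d<2. Hm q w2 w1 b a d c s t * Rm q (w1/w2) c d g h)"
  using two_cases[OF assms(4)] two_cases[OF assms(5)] two_cases[OF assms(6)] two_cases[OF assms(7)]
  apply (simp only: sum2)
  apply (cases s; cases t; elim disjE; simp add: Rm_def Hm_def Lm_def x_plus_def x_minus_def sigma_z_def sigma_plus_def sigma_minus_def)
  using assms(1-3) by (auto simp: field_simps) 

lemma set_eq_split: "(S = T) \<longleftrightarrow> (S - {n} = T - {n} \<and> (n \<in> S \<longleftrightarrow> n \<in> T))"
  by blast

lemma lax_eq: "a<2 \<Longrightarrow> b<2 \<Longrightarrow> lax q n w a b S T = (if S - {n} = T - {n} then Lm q w a b (n\<in>S) (n\<in>T) else 0)"
  apply (drule two_cases)+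
  apply (auto simp: lax_def op_add_def op_scale_def op_id_def local_op_def Lm_def)
  done

lemma sum_local:
  assumes "n \<in> {1..N}" "S \<in> configs N"
  shows "(\<Sum>U\<in>configs N. (if S - {n} = U - {n} then h U else 0)) = h (insert n S) + h (S - {n})"
proof -
  have fin: "finite (configs N)" by (simp add: configs_def)
  have e: "{U\<in>configs N. S - {n} = U - {n}} = {insert n S, S - {n}}"
  proof (intro set_eqI iffI)
    fix U assume "U \<in> {U\<in>configs N. S - {n} = U - {n}}"
    then have h: "S - {n} = U - {n}" by simp
    show "U \<in> {insert n S, S - {n}}"
    proof (cases "n \<in> U")
      case True
      then have "U = insert n (U - {n})" by blast
      then show ?thesis using h by (metis insert_Diff_single insertI1)
    next
      case False
      then have "U = U - {n}" by blast
      then show ?thesis using h by simp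
    qed
  next
    fix U assume u: "U \<in> {insert n S, S - {n}}"
    have "insert n S \<in> configs N" "S - {n} \<in> configs N" using assms by (auto simp: configs_def)
    then show "U \<in> {U\<in>configs N. S - {n} = U - {n}}" using u by auto
  qed
  have ne: "insert n S \<noteq> S - {n}" by auto
  have "(\<Sum>U\<in>configs N. (if S - {n} = U - {n} then h U else 0)) = sum h {U\<in>configs N. S - {n} = U - {n}}"
    by (rule sum.inter_filter[OF fin, symmetric])
  also have "\<dots> = h (insert n S) + h (S - {n})" unfolding e using ne by simp
  finally show ?thesis .
qed

primrec Gp :: "complex \<Rightarrow> (nat\<Rightarrow>complex) \<Rightarrow> complex \<Rightarrow> nat \<Rightarrow> nat set \<Rightarrow> nat set \<Rightarrow> nat \<Rightarrow> nat \<Rightarrow> complex" where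
  "Gp q inh z 0 S T a b = (if a = b then 1 else 0)"
| "Gp q inh z (Suc k) S T a b = (\<Sum>c<2. Lm q (z / inh (Suc k)) a c (Suc k \<in> S) (Suc k \<in> T) * Gp q inh z k S T c b)"

lemma Gp_cong: "(\<forall>j. 1 \<le> j \<and> j \<le> k \<longrightarrow> (j\<in>S \<longleftrightarrow> j\<in>S') \<and> (j\<in>T \<longleftrightarrow> j\<in>T')) \<Longrightarrow> Gp q inh z k S T = Gp q inh z k S' T'"
proof (induction k)
  case 0 show ?case by (simp add: fun_eq_iff)
next
  case (Suc k)
  then have "Gp q inh z k S T = Gp q inh z k S' T'" by auto
  moreover have "(Suc k \<in> S) = (Suc k \<in> S')" "(Suc k \<in> T) = (Suc k \<in> T')" using Suc.prems by auto
  ultimately show ?case by (simp add: fun_eq_iff)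
qed



lemma ins_lem1: "n \<notin> A \<Longrightarrow> (insert n S - A = T - A) \<longleftrightarrow> (n \<in> T \<and> S - insert n A = T - insert n A)" by blast
lemma ins_lem2: "n \<notin> A \<Longrightarrow> (S - {n} - A = T - A) \<longleftrightarrow> (n \<notin> T \<and> S - insert n A = T - insert n A)" by blast
lemma mono_formula:
  assumes "k \<le> N" "a < 2" "b < 2"
  shows "S \<in> configs N \<Longrightarrow> monodromy_upto N q inh z k a b S T = (if S - {1..k} = T - {1..k} then Gp q inh z k S T a b else 0)"
  using assms
proof (induction k arbitrary: S a b)
  case 0
  then show ?case by (auto simp: aux_id_def op_id_def)
next
  case (Suc k)
  let ?n = "Suc k"
  let ?w = "z / inh ?n"
  have n: "?n \<in> {1..N}" using Suc.prems by auto
  have c1: "insert ?n S \<in> configs N" "S - {?n} \<in> configs N" using Suc.prems n by (auto simp: configs_def)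
  have "monodromy_upto N q inh z (Suc k) a b S T =
     (\<Sum>c<2. \<Sum>U\<in>configs N. (if S - {?n} = U - {?n} then Lm q ?w a c (?n\<in>S) (?n\<in>U) * monodromy_upto N q inh z k c b U T else 0))"
    using Suc.prems by (auto simp: aux_mult_def op_mult_def lax_eq intro!: sum.cong)
  also have "\<dots> = (\<Sum>c<2. Lm q ?w a c (?n\<in>S) True * monodromy_upto N q inh z k c b (insert ?n S) T
        + Lm q ?w a c (?n\<in>S) False * monodromy_upto N q inh z k c b (S - {?n}) T)"
    by (rule sum.cong[OF refl], subst sum_local[OF n Suc.prems(1)]) simp
  also have "\<dots> = (\<Sum>c<2. Lm q ?w a c (?n\<in>S) True * (if ?n \<in> T \<and> S - {1..?n} = T - {1..?n} then Gp q inh z k S T c b else 0)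
        + Lm q ?w a c (?n\<in>S) False * (if ?n \<notin> T \<and> S - {1..?n} = T - {1..?n} then Gp q inh z k S T c b else 0))"
  proof (rule sum.cong[OF refl])
    fix c assume "c \<in> {..<2::nat}"
    then have c: "c < 2" by auto
    have g1: "Gp q inh z k (insert ?n S) T = Gp q inh z k S T" by (rule Gp_cong) auto
    have g2: "Gp q inh z k (S - {?n}) T = Gp q inh z k S T" by (rule Gp_cong) auto
    have e1: "(insert ?n S - {1..k} = T - {1..k}) \<longleftrightarrow> (?n \<in> T \<and> S - {1..?n} = T - {1..?n})"
      using ins_lem1[of ?n "{1..k}" S T] by (simp add: atLeastAtMostSuc_conv)
    have e2: "(S - {?n} - {1..k} = T - {1..k}) \<longleftrightarrow> (?n \<notin> T \<and> S - {1..?n} = T - {1..?n})"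
      using ins_lem2[of ?n "{1..k}" S T] by (simp add: atLeastAtMostSuc_conv)
    show "Lm q ?w a c (?n\<in>S) True * monodromy_upto N q inh z k c b (insert ?n S) T
        + Lm q ?w a c (?n\<in>S) False * monodromy_upto N q inh z k c b (S - {?n}) T = 
        Lm q ?w a c (?n\<in>S) True * (if ?n \<in> T \<and> S - {1..?n} = T - {1..?n} then Gp q inh z k S T c b else 0)
        + Lm q ?w a c (?n\<in>S) False * (if ?n \<notin> T \<and> S - {1..?n} = T - {1..?n} then Gp q inh z k S T c b else 0)"
      using Suc.IH[OF c1(1) _ c] Suc.IH[OF c1(2) _ c] Suc.prems g1 g2 e1 e2 by simp
  qed
  also have "\<dots> = (if S - {1..?n} = T - {1..?n} then Gp q inh z ?n S T a b else 0)"
    by (cases "?n \<in> T") (auto intro!: sum.cong)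
  finally show ?case .
qed




definition Wm :: "complex \<Rightarrow> (nat\<Rightarrow>complex) \<Rightarrow> complex \<Rightarrow> complex \<Rightarrow> nat \<Rightarrow> nat set \<Rightarrow> nat set \<Rightarrow> nat \<Rightarrow> nat \<Rightarrow> nat \<Rightarrow> nat \<Rightarrow> complex" where
  "Wm q inh l m k S T a b e f = (\<Sum>U\<in>Pow {1..k}. Gp q inh l k S U a e * Gp q inh m k U T b f)"

lemma exch:
  fixes A :: "nat \<Rightarrow> nat \<Rightarrow> complex" and B :: "nat \<Rightarrow> nat \<Rightarrow> nat \<Rightarrow> nat \<Rightarrow> complex"
  shows "(\<Sum>c<2. \<Sum>d<2. A c d * (\<Sum>g<2. \<Sum>h<2. B c d g h * C g h)) =
   (\<Sum>g<2. \<Sum>h<2. (\<Sum>c<2. \<Sum>d<2. A c d * B c d g h) * (C g h::complex))"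
  by (simp only: sum2) (simp add: algebra_simps)

lemma inj_ins: "n \<notin> A \<Longrightarrow> inj_on (insert n) (Pow A)"
  unfolding inj_on_def by (metis Diff_insert_absorb PowD subsetD)

lemma swap3: "(\<Sum>U\<in>A. \<Sum>c<(2::nat). \<Sum>d<(2::nat). X c d * G U c d) = (\<Sum>c<2. \<Sum>d<2. (X c d::complex) * (\<Sum>U\<in>A. G U c d))"
proof -
  have "(\<Sum>U\<in>A. \<Sum>c<(2::nat). \<Sum>d<(2::nat). X c d * G U c d) = (\<Sum>c<2. \<Sum>U\<in>A. \<Sum>d<(2::nat). X c d * G U c d)"
    by (rule sum.swap)
  also have "\<dots> = (\<Sum>c<2. \<Sum>d<2. \<Sum>U\<in>A. X c d * G U c d)"
    by (rule sum.cong[OF refl], rule sum.swap)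
  finally show ?thesis by (simp add: sum_distrib_left)
qed

lemma W_Suc:
  "Wm q inh l m (Suc k) S T a b e f =
    (\<Sum>c<2. \<Sum>d<2. Hm q (l / inh (Suc k)) (m / inh (Suc k)) a b c d (Suc k \<in> S) (Suc k \<in> T) * Wm q inh l m k S T c d e f)"
proof -
  let ?n = "Suc k"
  let ?s = "?n \<in> S" and ?t = "?n \<in> T"
  define wl where "wl = l / inh ?n"
  define wm where "wm = m / inh ?n"
  define F where "F U = Gp q inh l (Suc k) S U a e * Gp q inh m (Suc k) U T b f" for U
  define G where "G U c d = Gp q inh l k S U c e * Gp q inh m k U T d f" for U c d
  have P: "Pow {1..Suc k} = Pow {1..k} \<union> insert ?n ` Pow {1..k}"
    by (simp add: atLeastAtMostSuc_conv Pow_insert)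
  have disj: "Pow {1..k} \<inter> insert ?n ` Pow {1..k} = {}" by auto
  have inj: "inj_on (insert ?n) (Pow {1..k})"
    by (rule inj_ins) simp
  have "Wm q inh l m (Suc k) S T a b e f = sum F (Pow {1..Suc k})"
    unfolding Wm_def F_def ..
  also have "\<dots> = sum F (Pow {1..k}) + sum F (insert ?n ` Pow {1..k})"
    unfolding P by (rule sum.union_disjoint) (use disj in auto)
  also have "sum F (insert ?n ` Pow {1..k}) = sum (F \<circ> insert ?n) (Pow {1..k})"
    by (rule sum.reindex[OF inj])
  also have "sum F (Pow {1..k}) = (\<Sum>U\<in>Pow {1..k}. \<Sum>c<2. \<Sum>d<2. (Lm q wl a c ?s False * Lm q wm b d False ?t) * G U c d)"
  proof (rule sum.cong[OF refl])
    fix U assume "U \<in> Pow {1..k}"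
    then have "?n \<notin> U" by auto
    then show "F U = (\<Sum>c<2. \<Sum>d<2. (Lm q wl a c ?s False * Lm q wm b d False ?t) * G U c d)"
      unfolding F_def G_def wl_def wm_def by (simp add: sum_product algebra_simps)
  qed
  also have "sum (F \<circ> insert ?n) (Pow {1..k}) = (\<Sum>U\<in>Pow {1..k}. \<Sum>c<2. \<Sum>d<2. (Lm q wl a c ?s True * Lm q wm b d True ?t) * G U c d)"
  proof (rule sum.cong[OF refl])
    fix U assume "U \<in> Pow {1..k}"
    have g1: "Gp q inh l k S (insert ?n U) = Gp q inh l k S U" by (rule Gp_cong) auto
    have g2: "Gp q inh m k (insert ?n U) T = Gp q inh m k U T" by (rule Gp_cong) auto
    show "(F \<circ> insert ?n) U = (\<Sum>c<2. \<Sum>d<2. (Lm q wl a c ?s True * Lm q wm b d True ?t) * G U c d)"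
      unfolding F_def G_def wl_def wm_def o_def by (simp add: sum_product algebra_simps g1 g2)
  qed
  also have "(\<Sum>U\<in>Pow {1..k}. \<Sum>c<2. \<Sum>d<2. (Lm q wl a c ?s False * Lm q wm b d False ?t) * G U c d)
     = (\<Sum>c<2. \<Sum>d<2. (Lm q wl a c ?s False * Lm q wm b d False ?t) * (\<Sum>U\<in>Pow {1..k}. G U c d))"
    by (rule swap3)
  also have "(\<Sum>U\<in>Pow {1..k}. \<Sum>c<2. \<Sum>d<2. (Lm q wl a c ?s True * Lm q wm b d True ?t) * G U c d)
     = (\<Sum>c<2. \<Sum>d<2. (Lm q wl a c ?s True * Lm q wm b d True ?t) * (\<Sum>U\<in>Pow {1..k}. G U c d))"
    by (rule swap3)
  finally show ?thesis
    unfolding Hm_def Wm_def G_def wl_def[symmetric] wm_def[symmetric]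
    by (simp only: sum2) (simp add: algebra_simps)
qed




lemma Wm_0: "Wm q inh l m 0 S T a b e f = (if a = e \<and> b = f then 1 else 0)"
  by (simp add: Wm_def)

lemma RTT:
  assumes inz: "\<forall>n\<in>{1..k}. inh n \<noteq> 0" and l: "l \<noteq> 0" and m: "m \<noteq> 0" and q: "q \<noteq> 0"
    and ab: "a < 2" "b < 2" and ef: "e < 2" "f < 2"
  shows "(\<Sum>c<2. \<Sum>d<2. Rm q (l/m) a b c d * Wm q inh l m k S T c d e f) =
         (\<Sum>c<2. \<Sum>d<2. Wm q inh m l k S T b a d c * Rm q (l/m) c d e f)"
  using inz ab
proof (induction k arbitrary: a b)
  case 0
  show ?case using two_cases[OF 0(2)] two_cases[OF 0(3)] two_cases[OF ef(1)] two_cases[OF ef(2)]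
    by (elim disjE) (simp_all add: sum2 Wm_0 Rm_def)
next
  case (Suc k)
  let ?n = "Suc k"
  let ?s = "?n \<in> S" and ?t = "?n \<in> T"
  define w1 where "w1 = l / inh ?n"
  define w2 where "w2 = m / inh ?n"
  have hn: "inh ?n \<noteq> 0" using Suc.prems by auto
  have w12: "w1 / w2 = l / m" using hn m unfolding w1_def w2_def by (simp add: field_simps)
  have w1: "w1 \<noteq> 0" and w2: "w2 \<noteq> 0" using hn l m unfolding w1_def w2_def by auto
  have IH: "\<And>c d. c < 2 \<Longrightarrow> d < 2 \<Longrightarrow> (\<Sum>g<2. \<Sum>h<2. Rm q (l/m) c d g h * Wm q inh l m k S T g h e f) =
         (\<Sum>g<2. \<Sum>h<2. Wm q inh m l k S T d c h g * Rm q (l/m) g h e f)"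
    using Suc.IH Suc.prems by auto
  have "(\<Sum>c<2. \<Sum>d<2. Rm q (l/m) a b c d * Wm q inh l m (Suc k) S T c d e f)
     = (\<Sum>c<2. \<Sum>d<2. Rm q (l/m) a b c d * (\<Sum>g<2. \<Sum>h<2. Hm q w1 w2 c d g h ?s ?t * Wm q inh l m k S T g h e f))"
    unfolding W_Suc w1_def w2_def ..
  also have "\<dots> = (\<Sum>g<2. \<Sum>h<2. (\<Sum>c<2. \<Sum>d<2. Rm q (w1/w2) a b c d * Hm q w1 w2 c d g h ?s ?t) * Wm q inh l m k S T g h e f)"
    unfolding w12 by (rule exch)
  also have "\<dots> = (\<Sum>g<2. \<Sum>h<2. (\<Sum>c<2. \<Sum>d<2. Hm q w2 w1 b a d c ?s ?t * Rm q (w1/w2) c d g h) * Wm q inh l m k S T g h e f)"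
    by (intro sum.cong refl, subst RLL[OF w1 w2 q]) (use Suc.prems in auto)
  also have "\<dots> = (\<Sum>c<2. \<Sum>d<2. Hm q w2 w1 b a d c ?s ?t * (\<Sum>g<2. \<Sum>h<2. Rm q (l/m) c d g h * Wm q inh l m k S T g h e f))"
    unfolding w12 by (rule exch[symmetric])
  also have "\<dots> = (\<Sum>c<2. \<Sum>d<2. Hm q w2 w1 b a d c ?s ?t * (\<Sum>g<2. \<Sum>h<2. Wm q inh m l k S T d c h g * Rm q (l/m) g h e f))"
    by (intro sum.cong refl, subst IH) auto
  also have "\<dots> = (\<Sum>g<2. \<Sum>h<2. (\<Sum>c<2. \<Sum>d<2. Hm q w2 w1 b a d c ?s ?t * Wm q inh m l k S T d c h g) * Rm q (l/m) g h e f)"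
    by (rule exch)
  also have "\<dots> = (\<Sum>g<2. \<Sum>h<2. Wm q inh m l (Suc k) S T b a h g * Rm q (l/m) g h e f)"
    unfolding W_Suc w1_def w2_def by (simp only: sum2) (simp add: algebra_simps)
  finally show ?case .
qed




lemma AT_eq:
  assumes "S \<in> configs N" "T \<in> configs N"
  shows "antiperiodic_transfer N q inh z S T = Gp q inh z N S T 0 1 + Gp q inh z N S T 1 0"
proof -
  have e: "S - {1..N} = T - {1..N}" using assms by (auto simp: configs_def)
  show ?thesis
    unfolding antiperiodic_transfer_def op_add_def monodromy_def
    using mono_formula[of N N 0 1 S q inh z T] mono_formula[of N N 1 0 S q inh z T] assms e by simp
qed

lemma prod_W:
  assumes "S \<in> configs N" "T \<in> configs N"
  shows "op_mult N (antiperiodic_transfer N q inh l) (antiperiodic_transfer N q inh m) S T =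
    Wm q inh l m N S T 0 0 1 1 + Wm q inh l m N S T 0 1 1 0 + Wm q inh l m N S T 1 0 0 1 + Wm q inh l m N S T 1 1 0 0"
proof -
  have "op_mult N (antiperiodic_transfer N q inh l) (antiperiodic_transfer N q inh m) S T =
     (\<Sum>U\<in>Pow {1..N}. (Gp q inh l N S U 0 1 + Gp q inh l N S U 1 0) * (Gp q inh m N U T 0 1 + Gp q inh m N U T 1 0))"
    unfolding op_mult_def using assms by (intro sum.cong) (auto simp: configs_def AT_eq)
  also have "\<dots> = Wm q inh l m N S T 0 0 1 1 + Wm q inh l m N S T 0 1 1 0 + Wm q inh l m N S T 1 0 0 1 + Wm q inh l m N S T 1 1 0 0"
    unfolding Wm_def by (simp add: algebra_simps sum.distrib)
  finally show ?thesis .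
qed

lemma comm_generic:
  assumes inz: "\<forall>n\<in>{1..N}. inh n \<noteq> 0" and l: "l \<noteq> 0" and m: "m \<noteq> 0" and q: "q \<noteq> 0"
    and gA: "(l/m)*q - inverse ((l/m)*q) \<noteq> 0"
    and gB: "(l/m - inverse (l/m))^2 \<noteq> (q - inverse q)^2"
    and ST: "S \<in> configs N" "T \<in> configs N"
  shows "op_mult N (antiperiodic_transfer N q inh l) (antiperiodic_transfer N q inh m) S T =
         op_mult N (antiperiodic_transfer N q inh m) (antiperiodic_transfer N q inh l) S T"
proof -
  define A where "A = (l/m)*q - inverse ((l/m)*q)"
  define B where "B = l/m - inverse (l/m)"
  define C where "C = q - inverse q"
  define X where "X a b e f = Wm q inh l m N S T a b e f" for a b e f
  define Y where "Y a b e f = Wm q inh m l N S T a b e f" for a b e f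
  have R: "\<And>a b e f. a<2 \<Longrightarrow> b<2 \<Longrightarrow> e<2 \<Longrightarrow> f<2 \<Longrightarrow> (\<Sum>c<2. \<Sum>d<2. Rm q (l/m) a b c d * X c d e f) =
         (\<Sum>c<2. \<Sum>d<2. Y b a d c * Rm q (l/m) c d e f)"
    unfolding X_def Y_def by (rule RTT) (use inz l m q in auto)
  have e1: "A * X 0 0 1 1 = A * Y 0 0 1 1" using R[of 0 0 1 1] by (simp add: sum2 Rm_def A_def algebra_simps)
  have e2: "A * X 1 1 0 0 = A * Y 1 1 0 0" using R[of 1 1 0 0] by (simp add: sum2 Rm_def A_def algebra_simps)
  have e3: "B * X 0 1 1 0 + C * X 1 0 1 0 = B * Y 1 0 0 1 + C * Y 1 0 1 0"
    using R[of 0 1 1 0] by (simp add: sum2 Rm_def B_def C_def algebra_simps)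
  have e4: "B * X 1 0 0 1 + C * X 0 1 0 1 = B * Y 0 1 1 0 + C * Y 0 1 0 1"
    using R[of 1 0 0 1] by (simp add: sum2 Rm_def B_def C_def algebra_simps)
  have e5: "B * X 0 1 0 1 + C * X 1 0 0 1 = B * Y 1 0 1 0 + C * Y 1 0 0 1"
    using R[of 0 1 0 1] by (simp add: sum2 Rm_def B_def C_def algebra_simps)
  have e6: "B * X 1 0 1 0 + C * X 0 1 1 0 = B * Y 0 1 0 1 + C * Y 0 1 1 0"
    using R[of 1 0 1 0] by (simp add: sum2 Rm_def B_def C_def algebra_simps)
  define u where "u = X 0 1 1 0 + X 1 0 0 1 - Y 1 0 0 1 - Y 0 1 1 0"
  define v where "v = X 1 0 1 0 + X 0 1 0 1 - Y 1 0 1 0 - Y 0 1 0 1"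
  have "B * u + C * v = (B * X 0 1 1 0 + C * X 1 0 1 0 - (B * Y 1 0 0 1 + C * Y 1 0 1 0)) + (B * X 1 0 0 1 + C * X 0 1 0 1 - (B * Y 0 1 1 0 + C * Y 0 1 0 1))"
    unfolding u_def v_def by (simp add: algebra_simps)
  also have "\<dots> = 0" using e3 e4 by simp
  finally have h1: "B * u + C * v = 0" .
  have "B * v + C * u = (B * X 0 1 0 1 + C * X 1 0 0 1 - (B * Y 1 0 1 0 + C * Y 1 0 0 1)) + (B * X 1 0 1 0 + C * X 0 1 1 0 - (B * Y 0 1 0 1 + C * Y 0 1 1 0))"
    unfolding u_def v_def by (simp add: algebra_simps)
  also have "\<dots> = 0" using e5 e6 by simp
  finally have h2: "B * v + C * u = 0" .
  have "(B*B - C*C) * u = B * (B * u + C * v) - C * (B * v + C * u)" by (simp add: algebra_simps)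
  also have "\<dots> = 0" using h1 h2 by simp
  finally have "(B*B - C*C) * u = 0" .
  moreover have "B*B - C*C \<noteq> 0" using gB unfolding B_def C_def by (simp add: power2_eq_square)
  ultimately have u0: "u = 0" by simp
  have A0: "A \<noteq> 0" using gA unfolding A_def .
  have x1: "X 0 0 1 1 = Y 0 0 1 1" using e1 A0 by simp
  have x2: "X 1 1 0 0 = Y 1 1 0 0" using e2 A0 by simp
  show ?thesis
    unfolding prod_W[OF ST] using x1 x2 u0 unfolding X_def Y_def u_def by (simp add: algebra_simps)
qed




definition laur :: "(complex \<Rightarrow> complex) \<Rightarrow> bool" where
  "laur f \<longleftrightarrow> (\<exists>p K. \<forall>x. x \<noteq> 0 \<longrightarrow> f x * x ^ K = poly p x)"

lemma laur_const: "laur (\<lambda>x. c)"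
  unfolding laur_def by (rule exI[of _ "[:c:]"], rule exI[of _ 0]) simp

lemma laur_id: "laur (\<lambda>x. x)"
  unfolding laur_def by (rule exI[of _ "[:0,1:]"], rule exI[of _ 0]) simp

lemma laur_inv: "laur (\<lambda>x. inverse x)"
  unfolding laur_def by (rule exI[of _ "1"], rule exI[of _ 1]) simp

lemma laur_add: "laur f \<Longrightarrow> laur g \<Longrightarrow> laur (\<lambda>x. f x + g x)"
proof -
  assume "laur f" "laur g"
  then obtain p1 K1 p2 K2 where h1: "\<forall>x. x \<noteq> 0 \<longrightarrow> f x * x ^ K1 = poly p1 x"
    and h2: "\<forall>x. x \<noteq> 0 \<longrightarrow> g x * x ^ K2 = poly p2 x" unfolding laur_def by blast
  show ?thesis unfolding laur_def
  proof (intro exI allI impI)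
    fix x :: complex assume x: "x \<noteq> 0"
    have "(f x + g x) * x ^ (K1 + K2) = (f x * x^K1) * x^K2 + (g x * x^K2) * x^K1"
      by (simp add: algebra_simps power_add)
    also have "\<dots> = poly (p1 * monom 1 K2 + p2 * monom 1 K1) x"
      using h1 h2 x by (simp add: poly_monom)
    finally show "(f x + g x) * x ^ (K1 + K2) = poly (p1 * monom 1 K2 + p2 * monom 1 K1) x" .
  qed
qed

lemma laur_mult: "laur f \<Longrightarrow> laur g \<Longrightarrow> laur (\<lambda>x. f x * g x)"
proof -
  assume "laur f" "laur g"
  then obtain p1 K1 p2 K2 where h1: "\<forall>x. x \<noteq> 0 \<longrightarrow> f x * x ^ K1 = poly p1 x"
    and h2: "\<forall>x. x \<noteq> 0 \<longrightarrow> g x * x ^ K2 = poly p2 x" unfolding laur_def by blast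
  show ?thesis unfolding laur_def
  proof (intro exI allI impI)
    fix x :: complex assume x: "x \<noteq> 0"
    have "(f x * g x) * x ^ (K1 + K2) = (f x * x^K1) * (g x * x^K2)"
      by (simp add: algebra_simps power_add)
    also have "\<dots> = poly (p1 * p2) x"
      using h1 h2 x by simp
    finally show "(f x * g x) * x ^ (K1 + K2) = poly (p1 * p2) x" .
  qed
qed

lemma laur_uminus: "laur f \<Longrightarrow> laur (\<lambda>x. - f x)"
  using laur_mult[OF laur_const[of "-1"]] by simp

lemma laur_diff: "laur f \<Longrightarrow> laur g \<Longrightarrow> laur (\<lambda>x. f x - g x)"
  using laur_add[OF _ laur_uminus] by simp

lemma laur_if: "laur f \<Longrightarrow> laur g \<Longrightarrow> laur (\<lambda>x. if P then f x else g x)"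
  by (cases P) simp_all

lemma laur_cong: "(\<And>x. x \<noteq> 0 \<Longrightarrow> f x = g x) \<Longrightarrow> laur g \<Longrightarrow> laur f"
  unfolding laur_def by (metis)

lemma laur_sum: "finite A \<Longrightarrow> (\<And>i. i \<in> A \<Longrightarrow> laur (f i)) \<Longrightarrow> laur (\<lambda>x. \<Sum>i\<in>A. f i x)"
proof (induction A rule: finite_induct)
  case empty then show ?case using laur_const[of 0] by simp
next
  case (insert a A)
  then show ?case by (simp add: laur_add)
qed

lemma laur_zero:
  assumes "laur f" and inf: "infinite {x. x \<noteq> 0 \<and> f x = 0}" and x: "x \<noteq> 0"
  shows "f x = 0"
proof -
  obtain p K where h: "\<forall>x. x \<noteq> 0 \<longrightarrow> f x * x ^ K = poly p x" using assms(1) unfolding laur_def by blast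
  have "{x. x \<noteq> 0 \<and> f x = 0} \<subseteq> {x. poly p x = 0}" using h by force
  then have "infinite {x. poly p x = 0}" using inf finite_subset by blast
  then have "p = 0" using poly_roots_finite by blast
  then have "f x * x ^ K = 0" using h x by simp
  then show ?thesis using x by simp
qed

lemma laur_xp: "e \<noteq> 0 \<Longrightarrow> q \<noteq> 0 \<Longrightarrow> laur (\<lambda>z. x_plus q (z / e))"
proof -
  assume e: "e \<noteq> 0" and q: "q \<noteq> 0"
  show ?thesis
  proof (rule laur_cong)
    fix z :: complex assume z: "z \<noteq> 0"
    show "x_plus q (z / e) = ((q+1)/(2*e)) * z + (- (inverse q + 1) * e / 2) * inverse z"
      unfolding x_plus_def using e q z by (simp add: field_simps)
  next
    show "laur (\<lambda>z. ((q+1)/(2*e)) * z + (- (inverse q + 1) * e / 2) * inverse z)"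
      by (intro laur_add laur_mult laur_const laur_id laur_inv)
  qed
qed

lemma laur_xm: "e \<noteq> 0 \<Longrightarrow> q \<noteq> 0 \<Longrightarrow> laur (\<lambda>z. x_minus q (z / e))"
proof -
  assume e: "e \<noteq> 0" and q: "q \<noteq> 0"
  show ?thesis
  proof (rule laur_cong)
    fix z :: complex assume z: "z \<noteq> 0"
    show "x_minus q (z / e) = ((q-1)/(2*e)) * z + (- (inverse q - 1) * e / 2) * inverse z"
      unfolding x_minus_def using e q z by (simp add: field_simps)
  next
    show "laur (\<lambda>z. ((q-1)/(2*e)) * z + (- (inverse q - 1) * e / 2) * inverse z)"
      by (intro laur_add laur_mult laur_const laur_id laur_inv)
  qed
qed

lemma laur_Lm: "e \<noteq> 0 \<Longrightarrow> q \<noteq> 0 \<Longrightarrow> laur (\<lambda>z. Lm q (z / e) a c s t)"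
  unfolding Lm_def
  by (intro laur_if laur_add laur_mult laur_const laur_xp laur_xm laur_uminus)

lemma laur_Gp: "\<forall>n\<in>{1..k}. inh n \<noteq> 0 \<Longrightarrow> q \<noteq> 0 \<Longrightarrow> laur (\<lambda>z. Gp q inh z k S T a b)"
proof (induction k arbitrary: a b)
  case 0 then show ?case by (simp add: laur_const)
next
  case (Suc k)
  have "inh (Suc k) \<noteq> 0" using Suc.prems by auto
  then show ?case using Suc
    by (simp only: Gp.simps) (intro laur_sum laur_mult laur_Lm, auto)
qed




lemma generic_ok:
  fixes u q :: complex
  assumes u: "u \<noteq> 0" and q: "q \<noteq> 0" and nb: "u \<noteq> q" "u \<noteq> -q" "u * q \<noteq> 1" "u * q \<noteq> -1"
  shows "u*q - inverse (u*q) \<noteq> 0" "(u - inverse u)^2 \<noteq> (q - inverse q)^2"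
proof -
  have f1: "u*q - 1 \<noteq> 0" "u*q + 1 \<noteq> 0" "u - q \<noteq> 0" "u + q \<noteq> 0" using nb by (auto simp: add_eq_0_iff) (metis minus_minus)
  have "u*q - inverse (u*q) = (u*q - 1) * (u*q + 1) / (u*q)" using u q by (simp add: field_simps)
  then show "u*q - inverse (u*q) \<noteq> 0" using f1 u q by simp
  have "(u - inverse u)^2 - (q - inverse q)^2 = (u - q) * (u + q) * (u*q + 1) * (u*q - 1) / (u*q)^2"
    using u q by (simp add: field_simps power2_eq_square)
  moreover have "(u - q) * (u + q) * (u*q + 1) * (u*q - 1) / (u*q)^2 \<noteq> 0" using f1 u q by simp
  ultimately show "(u - inverse u)^2 \<noteq> (q - inverse q)^2" by auto
qed

lemma laur_prod:
  assumes inz: "\<forall>n\<in>{1..N}. inh n \<noteq> 0" and q: "q \<noteq> 0" and ST: "S \<in> configs N" "T \<in> configs N"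
  shows "laur (\<lambda>l. op_mult N (antiperiodic_transfer N q inh l) (antiperiodic_transfer N q inh m) S T)"
    "laur (\<lambda>l. op_mult N (antiperiodic_transfer N q inh m) (antiperiodic_transfer N q inh l) S T)"
proof -
  have fin: "finite (configs N)" by (simp add: configs_def)
  have G: "\<And>U V. laur (\<lambda>l. Gp q inh l N U V 0 1 + Gp q inh l N U V 1 0)"
    by (intro laur_add laur_Gp inz q)
  show "laur (\<lambda>l. op_mult N (antiperiodic_transfer N q inh l) (antiperiodic_transfer N q inh m) S T)"
    unfolding op_mult_def
  proof (intro laur_sum fin)
    fix U assume U: "U \<in> configs N"
    show "laur (\<lambda>l. antiperiodic_transfer N q inh l S U * antiperiodic_transfer N q inh m U T)"
      by (rule laur_cong[where g="\<lambda>l. (Gp q inh l N S U 0 1 + Gp q inh l N S U 1 0) * antiperiodic_transfer N q inh m U T"])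
         (simp add: AT_eq[OF ST(1) U], intro laur_mult G laur_const)
  qed
  show "laur (\<lambda>l. op_mult N (antiperiodic_transfer N q inh m) (antiperiodic_transfer N q inh l) S T)"
    unfolding op_mult_def
  proof (intro laur_sum fin)
    fix U assume U: "U \<in> configs N"
    show "laur (\<lambda>l. antiperiodic_transfer N q inh m S U * antiperiodic_transfer N q inh l U T)"
      by (rule laur_cong[where g="\<lambda>l. antiperiodic_transfer N q inh m S U * (Gp q inh l N U T 0 1 + Gp q inh l N U T 1 0)"])
         (simp add: AT_eq[OF U ST(2)], intro laur_mult G laur_const)
  qed
qed

lemma comm_all:
  assumes inz: "\<forall>n\<in>{1..N}. inh n \<noteq> 0" and q: "q \<noteq> 0" and l: "l \<noteq> 0" and m: "m \<noteq> 0"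
    and ST: "S \<in> configs N" "T \<in> configs N"
  shows "op_mult N (antiperiodic_transfer N q inh l) (antiperiodic_transfer N q inh m) S T =
         op_mult N (antiperiodic_transfer N q inh m) (antiperiodic_transfer N q inh l) S T"
proof -
  define f where "f l = op_mult N (antiperiodic_transfer N q inh l) (antiperiodic_transfer N q inh m) S T -
         op_mult N (antiperiodic_transfer N q inh m) (antiperiodic_transfer N q inh l) S T" for l
  have lf: "laur f" unfolding f_def by (intro laur_diff laur_prod inz q ST)
  define B where "B = {0, m*q, -(m*q), m/q, -(m/q)}"
  have sub: "UNIV - B \<subseteq> {x. x \<noteq> 0 \<and> f x = 0}"
  proof
    fix x assume "x \<in> UNIV - B"
    then have x: "x \<noteq> 0" "x \<noteq> m*q" "x \<noteq> -(m*q)" "x \<noteq> m/q" "x \<noteq> -(m/q)" unfolding B_def by auto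
    have u: "x/m \<noteq> 0" using x m by simp
    have n1: "x/m \<noteq> q" using x(2) m by (auto simp: field_simps)
    have n2: "x/m \<noteq> -q" using x(3) m by (auto simp: field_simps)
    have n3: "x/m * q \<noteq> 1" using x(4) m q by (auto simp: field_simps)
    have n4: "x/m * q \<noteq> -1" using x(5) m q by (auto simp: field_simps)
    note g = generic_ok[OF u q n1 n2 n3 n4]
    have "f x = 0" unfolding f_def using comm_generic[OF inz x(1) m q g ST] by simp
    then show "x \<in> {x. x \<noteq> 0 \<and> f x = 0}" using x by simp
  qed
  have "infinite (UNIV - B)" unfolding B_def
    by (rule Diff_infinite_finite) (auto simp: infinite_UNIV_char_0)
  then have "infinite {x. x \<noteq> 0 \<and> f x = 0}" using sub finite_subset by blast
  then have "f l = 0" by (rule laur_zero[OF lf _ l])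
  then show ?thesis unfolding f_def by simp
qed




lemma LI:
  assumes q: "q \<noteq> 0" and cq: "cnj q = inverse q" and w: "w \<noteq> 0" and ac: "a < 2" "c < 2"
  shows "cnj (Lm q w a c t s) = (if a = c then 1 else -1) * Lm q (cnj w / q) (1-a) (1-c) s t"
  using two_cases[OF ac(1)] two_cases[OF ac(2)] q w
  by (cases s; cases t; elim disjE; simp add: Lm_def x_plus_def x_minus_def sigma_z_def sigma_plus_def sigma_minus_def cq; simp add: field_simps)

lemma LII:
  assumes q: "q \<noteq> 0" and cq: "cnj q = q" and w: "w \<noteq> 0" and ac: "a < 2" "c < 2"
  shows "cnj (Lm q w a c t s) = Lm q (- inverse (q * cnj w)) (1-a) (1-c) s t"
  using two_cases[OF ac(1)] two_cases[OF ac(2)] q w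
  by (cases s; cases t; elim disjE; simp add: Lm_def x_plus_def x_minus_def sigma_z_def sigma_plus_def sigma_minus_def cq; simp add: field_simps)

lemma LP:
  assumes ac: "a < 2" "c < 2"
  shows "Lm q (-w) a c s t = (if a = c then -1 else 1) * Lm q w a c s t"
  using two_cases[OF ac(1)] two_cases[OF ac(2)]
  by (cases s; cases t; elim disjE; simp add: Lm_def x_plus_def x_minus_def sigma_z_def sigma_plus_def sigma_minus_def; simp add: field_simps)




lemma GI:
  assumes q: "q \<noteq> 0" and cq: "cnj q = inverse q" and z: "z \<noteq> 0"
    and inh: "\<forall>n\<in>{1..k}. inh n \<noteq> 0 \<and> cnj (inh n) = inh n"
  shows "a < 2 \<Longrightarrow> b < 2 \<Longrightarrow> cnj (Gp q inh z k T S a b) = (if a = b then 1 else -1) * Gp q inh (cnj z / q) k S T (1-a) (1-b)"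
  using inh
proof (induction k arbitrary: a b)
  case 0 then show ?case using two_cases[OF 0(1)] two_cases[OF 0(2)] by auto
next
  case (Suc k)
  let ?n = "Suc k"
  have hn: "inh ?n \<noteq> 0" "cnj (inh ?n) = inh ?n" using Suc.prems by auto
  have w: "z / inh ?n \<noteq> 0" using z hn by simp
  have cw: "cnj (z / inh ?n) / q = (cnj z / q) / inh ?n" using hn by simp
  have IH: "\<And>c. c < 2 \<Longrightarrow> cnj (Gp q inh z k T S c b) = (if c = b then 1 else -1) * Gp q inh (cnj z / q) k S T (1-c) (1-b)"
    using Suc.IH Suc.prems by auto
  have L: "\<And>c. c < 2 \<Longrightarrow> cnj (Lm q (z / inh ?n) a c (?n \<in> T) (?n \<in> S)) = (if a = c then 1 else -1) * Lm q ((cnj z / q) / inh ?n) (1-a) (1-c) (?n \<in> S) (?n \<in> T)"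
    by (subst cw[symmetric]) (rule LI[OF q cq w Suc.prems(1)])
  show ?case
    using two_cases[OF Suc.prems(1)] two_cases[OF Suc.prems(2)] L[of 0] L[of 1] IH[of 0] IH[of 1]
    by (elim disjE) (simp_all add: sum2)
qed

lemma GII:
  assumes q: "q \<noteq> 0" and cq: "cnj q = q" and z: "z \<noteq> 0"
    and inh: "\<forall>n\<in>{1..k}. inh n \<noteq> 0 \<and> inh n * cnj (inh n) = 1"
  shows "a < 2 \<Longrightarrow> b < 2 \<Longrightarrow> cnj (Gp q inh z k T S a b) = Gp q inh (- inverse (q * cnj z)) k S T (1-a) (1-b)"
  using inh
proof (induction k arbitrary: a b)
  case 0 then show ?case using two_cases[OF 0(1)] two_cases[OF 0(2)] by auto
next
  case (Suc k)
  let ?n = "Suc k"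
  have hn: "inh ?n \<noteq> 0" "inh ?n * cnj (inh ?n) = 1" using Suc.prems by auto
  have w: "z / inh ?n \<noteq> 0" using z hn by simp
  have cn: "cnj (inh ?n) = inverse (inh ?n)" using hn by (simp add: field_simps)
  have cw: "- inverse (q * cnj (z / inh ?n)) = (- inverse (q * cnj z)) / inh ?n"
    using hn q z by (simp add: cn field_simps)
  have IH: "\<And>c. c < 2 \<Longrightarrow> cnj (Gp q inh z k T S c b) = Gp q inh (- inverse (q * cnj z)) k S T (1-c) (1-b)"
    using Suc.IH Suc.prems by auto
  have L: "\<And>c. c < 2 \<Longrightarrow> cnj (Lm q (z / inh ?n) a c (?n \<in> T) (?n \<in> S)) = Lm q ((- inverse (q * cnj z)) / inh ?n) (1-a) (1-c) (?n \<in> S) (?n \<in> T)"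
    by (subst cw[symmetric]) (rule LII[OF q cq w Suc.prems(1)])
  show ?case
    using two_cases[OF Suc.prems(1)] two_cases[OF Suc.prems(2)] L[of 0] L[of 1] IH[of 0] IH[of 1]
    by (elim disjE) (simp_all add: sum2)
qed

lemma GP:
  shows "a < 2 \<Longrightarrow> b < 2 \<Longrightarrow> Gp q inh (-z) k S T a b = (-1)^k * (if a = b then 1 else -1) * Gp q inh z k S T a b"
proof (induction k arbitrary: a b)
  case 0 then show ?case by auto
next
  case (Suc k)
  let ?n = "Suc k"
  have L: "\<And>c. c < 2 \<Longrightarrow> Lm q (- z / inh ?n) a c (?n \<in> S) (?n \<in> T) = (if a = c then -1 else 1) * Lm q (z / inh ?n) a c (?n \<in> S) (?n \<in> T)"
    using LP[OF Suc.prems(1)] by (metis minus_divide_left)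
  show ?case
    using two_cases[OF Suc.prems(1)] two_cases[OF Suc.prems(2)] L[of 0] L[of 1] Suc.IH[of 0] Suc.IH[of 1]
    by (elim disjE) (simp_all add: sum2 algebra_simps)
qed




lemma my_exp_cnj: "cnj (exp z) = exp (cnj z)"
  by (simp add: complex_eq_iff Re_exp Im_exp)

lemma ATI:
  assumes q: "q \<noteq> 0" and cq: "cnj q = inverse q" and z: "z \<noteq> 0"
    and inh: "\<forall>n\<in>{1..N}. inh n \<noteq> 0 \<and> cnj (inh n) = inh n"
    and ST: "S \<in> configs N" "T \<in> configs N"
  shows "cnj (antiperiodic_transfer N q inh z T S) = - antiperiodic_transfer N q inh (cnj z / q) S T"
  using GI[OF q cq z inh, of 0 1 T S] GI[OF q cq z inh, of 1 0 T S]
  by (simp add: AT_eq[OF ST] AT_eq[OF ST(2) ST(1)])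

lemma ATII:
  assumes q: "q \<noteq> 0" and cq: "cnj q = q" and z: "z \<noteq> 0"
    and inh: "\<forall>n\<in>{1..N}. inh n \<noteq> 0 \<and> inh n * cnj (inh n) = 1"
    and ST: "S \<in> configs N" "T \<in> configs N"
  shows "cnj (antiperiodic_transfer N q inh z T S) = antiperiodic_transfer N q inh (- inverse (q * cnj z)) S T"
  using GII[OF q cq z inh, of 0 1 T S] GII[OF q cq z inh, of 1 0 T S]
  by (simp add: AT_eq[OF ST] AT_eq[OF ST(2) ST(1)])

lemma ATP:
  assumes ST: "S \<in> configs N" "T \<in> configs N"
  shows "antiperiodic_transfer N q inh (-z) S T = - ((-1)^N * antiperiodic_transfer N q inh z S T)"
  using GP[of 0 1 q inh z N S T] GP[of 1 0 q inh z N S T]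
  by (simp add: AT_eq[OF ST] algebra_simps)

theorem mainTheorem1:
  fixes N :: nat and \<eta> :: complex and inh :: "nat \<Rightarrow> complex"
  assumes N_pos: "N \<ge> 1"
    and q_not_1: "exp \<eta> \<noteq> 1" and q_not_m1: "exp \<eta> \<noteq> -1"
    and inh_nz: "\<forall>n\<in>{1..N}. inh n \<noteq> 0"
  shows
   "(Re \<eta> = 0 \<and> (\<forall>n\<in>{1..N}. inh n \<in> \<real>) \<longrightarrow>
       (\<forall>z::complex. z \<noteq> 0 \<longrightarrow>
          normal_op N (antiperiodic_transfer N (exp \<eta>) inh z)) \<and>
       (\<forall>z::complex. z \<noteq> 0 \<and> z * exp (\<eta> / 2) \<in> \<real> \<longrightarrow>
          self_adjoint_op N (op_scale \<i> (antiperiodic_transfer N (exp \<eta>) inh z))))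
    \<and>
    (\<eta> \<in> \<real> \<and> (\<forall>n\<in>{1..N}. cmod (inh n) = 1) \<longrightarrow>
       (\<forall>z::complex. z \<noteq> 0 \<longrightarrow>
          normal_op N (antiperiodic_transfer N (exp \<eta>) inh z)) \<and>
       (\<forall>z::complex. z \<noteq> 0 \<and> cmod (z * exp (\<eta> / 2)) = 1 \<longrightarrow>
          self_adjoint_op N (op_scale (\<i> ^ (if even N then 1 else 0))
            (antiperiodic_transfer N (exp \<eta>) inh z))))"
proof (intro conjI impI allI)
  define q where "q = exp \<eta>"
  define r where "r = exp (\<eta> / 2)"
  have q0: "q \<noteq> 0" unfolding q_def by simp
  have r0: "r \<noteq> 0" unfolding r_def by simp
  have rr: "r * r = q" unfolding r_def q_def by (simp add: exp_add[symmetric])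
  let ?A = "antiperiodic_transfer N q inh"
  {
    assume h: "Re \<eta> = 0 \<and> (\<forall>n\<in>{1..N}. inh n \<in> \<real>)"
    have ce: "cnj \<eta> = - \<eta>" using h by (simp add: complex_eq_iff)
    have cq: "cnj q = inverse q" unfolding q_def by (simp add: my_exp_cnj ce exp_minus)
    have cr: "cnj r = inverse r" unfolding r_def by (simp add: my_exp_cnj ce exp_minus)
    have inh: "\<forall>n\<in>{1..N}. inh n \<noteq> 0 \<and> cnj (inh n) = inh n" using h inh_nz by (simp add: Reals_cnj_iff)
    {
      fix z :: complex assume z: "z \<noteq> 0"
      define z' where "z' = cnj z / q"
      have z': "z' \<noteq> 0" using z q0 unfolding z'_def by simp
      show "normal_op N (antiperiodic_transfer N (exp \<eta>) inh z)"
        unfolding normal_op_def op_eq_def q_def[symmetric]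
      proof (intro ballI)
        fix S T assume S: "S \<in> configs N" and T: "T \<in> configs N"
        have "op_mult N (?A z) (op_adj (?A z)) S T = - op_mult N (?A z) (?A z') S T"
          unfolding op_mult_def op_adj_def z'_def
          by (simp add: ATI[OF q0 cq z inh _ T] sum_negf[symmetric])
        also have "\<dots> = - op_mult N (?A z') (?A z) S T" using comm_all[OF inh_nz q0 z z' S T] by simp
        also have "\<dots> = op_mult N (op_adj (?A z)) (?A z) S T"
          unfolding op_mult_def op_adj_def z'_def
          by (simp add: ATI[OF q0 cq z inh S] sum_negf[symmetric])
        finally show "op_mult N (?A z) (op_adj (?A z)) S T = op_mult N (op_adj (?A z)) (?A z) S T" .
      qed
    }
    {
      fix z :: complex assume zz: "z \<noteq> 0 \<and> z * exp (\<eta> / 2) \<in> \<real>"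
      then have z: "z \<noteq> 0" by simp
      have "cnj (z * r) = z * r" using zz unfolding r_def by (simp add: Reals_cnj_iff)
      then have "cnj z * inverse r = z * r" by (simp add: cr)
      then have "cnj z = z * (r * r)" using r0 by (simp add: field_simps)
      then have zfix: "cnj z / q = z" using q0 rr by simp
      show "self_adjoint_op N (op_scale \<i> (antiperiodic_transfer N (exp \<eta>) inh z))"
        unfolding self_adjoint_op_def op_eq_def q_def[symmetric]
      proof (intro ballI)
        fix S T assume S: "S \<in> configs N" and T: "T \<in> configs N"
        show "op_adj (op_scale \<i> (?A z)) S T = op_scale \<i> (?A z) S T"
          unfolding op_adj_def op_scale_def using ATI[OF q0 cq z inh S T] zfix by simp
      qed
    }
  }
  {
    assume h: "\<eta> \<in> \<real> \<and> (\<forall>n\<in>{1..N}. cmod (inh n) = 1)"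
    have ce: "cnj \<eta> = \<eta>" using h by (simp add: Reals_cnj_iff)
    have cq: "cnj q = q" unfolding q_def by (simp add: my_exp_cnj ce)
    have cr: "cnj r = r" unfolding r_def by (simp add: my_exp_cnj ce)
    have inh: "\<forall>n\<in>{1..N}. inh n \<noteq> 0 \<and> inh n * cnj (inh n) = 1"
    proof
      fix n assume n: "n \<in> {1..N}"
      have "inh n * cnj (inh n) = of_real ((cmod (inh n))^2)" by (rule complex_norm_square[symmetric])
      then show "inh n \<noteq> 0 \<and> inh n * cnj (inh n) = 1" using h inh_nz n by simp
    qed
    {
      fix z :: complex assume z: "z \<noteq> 0"
      define z' where "z' = - inverse (q * cnj z)"
      have z': "z' \<noteq> 0" using z q0 unfolding z'_def by simp
      show "normal_op N (antiperiodic_transfer N (exp \<eta>) inh z)"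
        unfolding normal_op_def op_eq_def q_def[symmetric]
      proof (intro ballI)
        fix S T assume S: "S \<in> configs N" and T: "T \<in> configs N"
        have "op_mult N (?A z) (op_adj (?A z)) S T = op_mult N (?A z) (?A z') S T"
          unfolding op_mult_def op_adj_def z'_def
          by (simp add: ATII[OF q0 cq z inh _ T])
        also have "\<dots> = op_mult N (?A z') (?A z) S T" using comm_all[OF inh_nz q0 z z' S T] by simp
        also have "\<dots> = op_mult N (op_adj (?A z)) (?A z) S T"
          unfolding op_mult_def op_adj_def z'_def
          by (simp add: ATII[OF q0 cq z inh S])
        finally show "op_mult N (?A z) (op_adj (?A z)) S T = op_mult N (op_adj (?A z)) (?A z) S T" .
      qed
    }
    {
      fix z :: complex assume zz: "z \<noteq> 0 \<and> cmod (z * exp (\<eta> / 2)) = 1"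
      then have z: "z \<noteq> 0" by simp
      have "(z * r) * cnj (z * r) = of_real ((cmod (z * r))^2)" by (rule complex_norm_square[symmetric])
      then have "(z * r) * cnj (z * r) = 1" using zz unfolding r_def by simp
      then have "z * cnj z * (r * r) = 1" by (simp add: cr algebra_simps)
      then have "q * cnj z = inverse z" using z rr by (simp add: field_simps)
      then have zfix: "- inverse (q * cnj z) = - z" by simp
      show "self_adjoint_op N (op_scale (\<i> ^ (if even N then 1 else 0)) (antiperiodic_transfer N (exp \<eta>) inh z))"
        unfolding self_adjoint_op_def op_eq_def q_def[symmetric]
      proof (intro ballI)
        fix S T assume S: "S \<in> configs N" and T: "T \<in> configs N"
        have c: "cnj (?A z T S) = - ((-1)^N * ?A z S T)"
          using ATII[OF q0 cq z inh S T] zfix ATP[OF S T, of q inh z] by simp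
        show "op_adj (op_scale (\<i> ^ (if even N then 1 else 0)) (?A z)) S T = op_scale (\<i> ^ (if even N then 1 else 0)) (?A z) S T"
          unfolding op_adj_def op_scale_def using c by (cases "even N") auto
      qed
    }
  }
qed


end
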